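(* In the setting where $\mu_0<\mu_1$, $\sigma_H>0$, $\pi,\lambda,p\in(0,1)$ are fixed and $s\in(\mu_0,\mu_1)$, let $A(s)=1-\Phi\big((s-\mu_1)/\sigma_H\big)$, $B(s)=1-\Phi\big((s-\mu_0)/\sigma_H\big)$, \[ e^*=\lambda(1,\pi;s)=\frac{\lambda\,[\pi A+(1-\pi)p]}{\pi\,[\lambda A+(1-\lambda)B]+(1-\pi)\,p},\qquad p_H=\frac{\lambda A}{\lambda A+(1-\lambda)B},\qquad p_L=\lambda, \] and \[ J^+=\log\frac{A}{\lambda A+(1-\lambda)B},\qquad J^-=\log\frac{1-e^*p_H}{1-e^*p_L}. \] Then, holding $(s,\pi,\lambda,p,\mu_0,\mu_1)$ fixed, $\partial_{\sigma_H}J^+<0$ and $\partial_{\sigma_H}J^->0$.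
   Context: Gaussian–quadratic benchmark: $s\mid(\theta,\omega)\sim\mathcal N(\mu_\omega,\sigma_\theta^2)$; the High type recommends risk iff her signal exceeds the cutoff $s$; the Low type recommends risk with signal-independent probability $p$; $p_\theta=\Pr(\omega=1\mid\theta,a=1)$; $e^*$ is the implementer's effort under quadratic cost; $J^+$ and $J^-$ are the log-likelihood-ratio jumps of the type posterior after success and failure following a risky recommendation. *)

theory Defs
  imports "HOL-Probability.Probability"
begin

definition Phi :: "real \<Rightarrow> real" where
  "Phi x = (LINT t:{..x}|lborel. std_normal_density t)"

text \<open>Parameters: mu0, mu1 (state means), sH (High type's signal s.d.),
  pr (prior pi), lam (lambda), p (Low type's risk probability), s (cutoff).\<close>

definition A_fn :: "real \<Rightarrow> real \<Rightarrow> real \<Rightarrow> real" where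
  "A_fn mu1 sH s = 1 - Phi ((s - mu1) / sH)"

definition B_fn :: "real \<Rightarrow> real \<Rightarrow> real \<Rightarrow> real" where
  "B_fn mu0 sH s = 1 - Phi ((s - mu0) / sH)"

definition e_star :: "real \<Rightarrow> real \<Rightarrow> real \<Rightarrow> real \<Rightarrow> real \<Rightarrow> real \<Rightarrow> real \<Rightarrow> real" where
  "e_star mu0 mu1 sH pr lam p s =
     (let A = A_fn mu1 sH s; B = B_fn mu0 sH s in
      lam * (pr * A + (1 - pr) * p) / (pr * (lam * A + (1 - lam) * B) + (1 - pr) * p))"

definition p_H :: "real \<Rightarrow> real \<Rightarrow> real \<Rightarrow> real \<Rightarrow> real \<Rightarrow> real" where
  "p_H mu0 mu1 sH lam s =
     (let A = A_fn mu1 sH s; B = B_fn mu0 sH s in lam * A / (lam * A + (1 - lam) * B))"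

definition p_L :: "real \<Rightarrow> real" where
  "p_L lam = lam"

definition J_plus :: "real \<Rightarrow> real \<Rightarrow> real \<Rightarrow> real \<Rightarrow> real \<Rightarrow> real" where
  "J_plus mu0 mu1 sH lam s =
     (let A = A_fn mu1 sH s; B = B_fn mu0 sH s in ln (A / (lam * A + (1 - lam) * B)))"

definition J_minus :: "real \<Rightarrow> real \<Rightarrow> real \<Rightarrow> real \<Rightarrow> real \<Rightarrow> real \<Rightarrow> real \<Rightarrow> real" where
  "J_minus mu0 mu1 sH pr lam p s =
     (let e = e_star mu0 mu1 sH pr lam p s in
      ln ((1 - e * p_H mu0 mu1 sH lam s) / (1 - e * p_L lam)))"

end

theory Submission
  imports Defs
begin




lemma snd_integrable: "integrable lborel std_normal_density"
  using integrable_std_normal_moment[of 0] by simp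

lemma snd_int1: "integral\<^sup>L lborel std_normal_density = 1"
  using integral_std_normal_moment_even[of 0] by simp

lemma snd_pos: "std_normal_density x > 0"
  by (simp add: std_normal_density_def)

lemma snd_cont: "continuous_on S std_normal_density"
  unfolding std_normal_density_def by (intro continuous_intros) auto

lemma Phi_split:
  assumes "a \<le> u"
  shows "Phi u = (LINT t:{..<a}|lborel. std_normal_density t) + (LBINT t=a..u. std_normal_density t)"
proof -
  have si: "set_integrable lborel S std_normal_density" if "S \<in> sets lborel" for S
    unfolding set_integrable_def using snd_integrable that
    by (intro integrable_mult_indicator) auto
  have "{..u} = {..<a} \<union> {a..u}" using assms by auto
  then have "Phi u = (LINT t:{..<a} \<union> {a..u}|lborel. std_normal_density t)"
    by (simp add: Phi_def)
  also have "\<dots> = (LINT t:{..<a}|lborel. std_normal_density t) + (LINT t:{a..u}|lborel. std_normal_density t)"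
    by (rule set_integral_Un) (auto intro!: si)
  finally show ?thesis using interval_integral_Icc[OF assms, of std_normal_density] by simp
qed

lemma Phi_deriv: "(Phi has_real_derivative std_normal_density x) (at x)"
proof -
  let ?F = "\<lambda>u. (LINT t:{..<x-1}|lborel. std_normal_density t) + (LBINT t=x-1..u. std_normal_density t)"
  have "((\<lambda>u. LBINT t=x-1..u. std_normal_density t) has_vector_derivative std_normal_density x) (at x within {x-1..x+1})"
    by (rule interval_integral_FTC2) (auto intro: snd_cont)
  then have "((\<lambda>u. LBINT t=x-1..u. std_normal_density t) has_real_derivative std_normal_density x) (at x)"
    by (subst (asm) at_within_interior[where x=x]) (auto simp: has_real_derivative_iff_has_vector_derivative)
  then have "(?F has_real_derivative std_normal_density x) (at x)"
    by (auto intro!: derivative_eq_intros)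
  then show ?thesis
    by (rule has_field_derivative_transform_within_open[where S="{x-1<..}"]) (auto simp: Phi_split[of "x-1"])
qed

lemma Phi_le1: "Phi x \<le> 1"
proof -
  have "Phi x \<le> integral\<^sup>L lborel std_normal_density"
    unfolding Phi_def set_lebesgue_integral_def
    by (intro integral_mono integrable_mult_indicator snd_integrable)
       (auto simp: indicator_def less_imp_le[OF snd_pos])
  then show ?thesis using snd_int1 by simp
qed

lemma Phi_mono: assumes "x < y" shows "Phi x < Phi y"
  by (rule DERIV_pos_imp_increasing[OF assms]) (meson Phi_deriv snd_pos)

lemma Phi_lt1: "Phi x < 1"
  using Phi_mono[of x "x+1"] Phi_le1[of "x+1"] by simp




lemma core_ineqs:
  fixes A B pr lam p :: real
  assumes B: "0 < B" "B < A" and pr: "0 < pr" "pr < 1" and lam: "0 < lam" "lam < 1" and p: "0 < p" "p < 1"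
  defines "q \<equiv> (1 - pr) * p"
  defines "N \<equiv> pr * A + q"
  defines "D \<equiv> lam * A + (1 - lam) * B"
  defines "M \<equiv> pr * D + q"
  defines "G \<equiv> D * M - lam^2 * A * N"
  defines "H \<equiv> M - lam^2 * N"
  defines "GA \<equiv> lam * M + D * pr * lam - lam^2 * N - lam^2 * A * pr"
  defines "GB \<equiv> (1 - lam) * (M + pr * D)"
  shows "0 < D" "0 < M" "0 < H" "0 < G" "0 < N"
    "GA / G - lam / D - pr * lam * (1 - lam) / H < 0"
    "GB / G - (1 - lam) / D - pr * (1 - lam) / H > 0"
proof -
  have q: "0 < q" unfolding q_def using pr p by simp
  have A0: "0 < A" using B by simp
  show N: "0 < N" unfolding N_def using q pr A0 by (simp add: add_pos_pos)
  show D: "0 < D" unfolding D_def using lam B by (simp add: add_pos_pos)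
  show M: "0 < M" unfolding M_def using D q pr by (simp add: add_pos_pos)
  have DA: "D < A"
  proof -
    have "A - (lam * A + (1 - lam) * B) = (1 - lam) * (A - B)" by (simp add: algebra_simps)
    moreover have "0 < (1 - lam) * (A - B)" using lam B by simp
    ultimately show ?thesis unfolding D_def by linarith
  qed
  have lam2: "lam^2 < lam" using lam by (simp add: power2_eq_square)
  have HM: "H < M" unfolding H_def using N lam by simp
  have Hpos: "H = pr * (lam * A * (1 - lam) + (1 - lam) * B) + q * (1 - lam^2)"
    unfolding H_def M_def N_def D_def by (simp add: algebra_simps power2_eq_square)
  have "0 < pr * (lam * A * (1 - lam) + (1 - lam) * B)" using pr lam B A0 by (simp add: add_pos_pos)
  moreover have "0 < q * (1 - lam^2)" using q lam lam2 by simp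
  ultimately show H: "0 < H" using Hpos by linarith
  define E where "E = A - D"
  have E: "0 < E" using DA E_def by simp
  have GE: "G = D * H - lam^2 * N * E" unfolding G_def H_def E_def by (simp add: algebra_simps)
  have "lam * N < M"
  proof -
    have "M - lam * N = (1 - lam) * (pr * B + q)" unfolding M_def N_def D_def by (simp add: algebra_simps)
    moreover have "0 < (1 - lam) * (pr * B + q)" using lam pr B q by (simp add: add_pos_pos)
    ultimately show ?thesis unfolding M_def N_def D_def by linarith
  qed
  have "lam^2 * A * N < D * M"
  proof -
    have "D * M - lam^2 * A * N = lam * A * (M - lam * N) + (1 - lam) * B * M"
      unfolding D_def by (simp add: algebra_simps power2_eq_square)
    moreover have "0 < lam * A * (M - lam * N)" using \<open>lam * N < M\<close> lam B by simp
    moreover have "0 < (1 - lam) * B * M" using lam B M by simp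
    ultimately show ?thesis by linarith
  qed
  then show G: "0 < G" unfolding G_def by simp
  define K where "K = H + pr * (1 - lam) * D"
  have GAK: "GA = lam * (K - lam * pr * E - lam * (1 - lam) * N)"
    unfolding GA_def K_def E_def H_def by (simp add: algebra_simps power2_eq_square)
  have f1: "lam * E < (1 - lam) * D"
  proof -
    have "(1 - lam) * D - lam * E = (1 - lam) * B" unfolding E_def D_def by (simp add: algebra_simps)
    moreover have "0 < (1 - lam) * B" using lam B by simp
    ultimately show ?thesis by linarith
  qed
  have f2: "lam * (1 - lam) * N < H"
  proof -
    have "H - lam * (1 - lam) * N = pr * (1 - lam) * B + q * (1 - lam)"
      unfolding H_def M_def N_def D_def by (simp add: algebra_simps power2_eq_square)
    moreover have "0 < pr * (1 - lam) * B + q * (1 - lam)" using pr lam B q by (simp add: add_pos_pos)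
    ultimately show ?thesis by linarith
  qed
  have i1: "lam * E * (N * H) < (1 - lam) * D * (N * H)"
    using f1 N H by simp
  have i2: "lam * (1 - lam) * N * (pr * E * D) < H * (pr * E * D)"
    using f2 pr E D by simp
  have key: "lam * N * E * K < pr * E * D * H + (1 - lam) * N * D * H"
    using i1 i2 unfolding K_def by (simp add: algebra_simps)
  have "GA * D * H < G * (lam * H + pr * lam * (1 - lam) * D)"
  proof -
    have "G * (lam * H + pr * lam * (1 - lam) * D) - GA * D * H
        = lam * (pr * lam * E * D * H + lam * (1 - lam) * N * D * H - lam^2 * N * E * K)"
      unfolding GAK GE K_def by (simp add: algebra_simps power2_eq_square)
    also have "\<dots> = lam^2 * (pr * E * D * H + (1 - lam) * N * D * H - lam * N * E * K)"
      by (simp add: algebra_simps power2_eq_square)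
    also have "\<dots> > 0" using key lam by (intro mult_pos_pos) auto
    finally show ?thesis by simp
  qed
  then show "GA / G - lam / D - pr * lam * (1 - lam) / H < 0"
    using G D H by (simp add: field_simps)
  have "G * (H + pr * D) < D * H * (M + pr * D)"
  proof -
    have "0 < lam^2 * N * E" using lam N E by simp
    then have "G < D * H" using GE by linarith
    moreover have "0 < H + pr * D" using H pr D by (simp add: add_pos_pos)
    ultimately have "G * (H + pr * D) < D * H * (H + pr * D)" by (rule mult_strict_right_mono)
    also have "\<dots> < D * H * (M + pr * D)" using HM D H by (intro mult_strict_left_mono) auto
    finally show ?thesis .
  qed
  then have "(1 - lam) * (G * (H + pr * D)) < (1 - lam) * (D * H * (M + pr * D))"
    using lam by simp
  moreover have "G * ((1 - lam) * H + pr * (1 - lam) * D) = (1 - lam) * (G * (H + pr * D))"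
    by (simp add: algebra_simps)
  moreover have "GB * D * H = (1 - lam) * (D * H * (M + pr * D))"
    unfolding GB_def by (simp add: algebra_simps)
  ultimately have "G * ((1 - lam) * H + pr * (1 - lam) * D) < GB * D * H" by (simp only:)
  then show "GB / G - (1 - lam) / D - pr * (1 - lam) / H > 0"
    using G D H by (simp add: field_simps)
qed




lemma Jm_deriv:
  fixes fA fB :: "real \<Rightarrow> real"
  assumes dA: "(fA has_real_derivative a') (at x)" and dB: "(fB has_real_derivative b') (at x)"
    and a': "a' < 0" and b': "b' > 0"
    and B: "0 < fB x" "fB x < fA x" and pr: "0 < pr" "pr < 1" and lam: "0 < lam" "lam < 1" and p: "0 < p" "p < 1"
  shows "\<exists>Dv>0. ((\<lambda>y. ln ((lam * fA y + (1 - lam) * fB y) * (pr * (lam * fA y + (1 - lam) * fB y) + (1 - pr) * p)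
                         - lam^2 * fA y * (pr * fA y + (1 - pr) * p))
                - ln (lam * fA y + (1 - lam) * fB y)
                - ln ((pr * (lam * fA y + (1 - lam) * fB y) + (1 - pr) * p) - lam^2 * (pr * fA y + (1 - pr) * p)))
           has_real_derivative Dv) (at x)"
proof -
  define q where "q = (1 - pr) * p"
  define Df where "Df = (\<lambda>y. lam * fA y + (1 - lam) * fB y)"
  define Nf where "Nf = (\<lambda>y. pr * fA y + q)"
  define Mf where "Mf = (\<lambda>y. pr * Df y + q)"
  define Gf where "Gf = (\<lambda>y. Df y * Mf y - lam^2 * fA y * Nf y)"
  define Hf where "Hf = (\<lambda>y. Mf y - lam^2 * Nf y)"
  define A where "A = fA x"
  define B' where "B' = fB x"
  define N where "N = pr * A + q"
  define D where "D = lam * A + (1 - lam) * B'"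
  define M where "M = pr * D + q"
  define G where "G = D * M - lam^2 * A * N"
  define H where "H = M - lam^2 * N"
  define GA where "GA = lam * M + D * pr * lam - lam^2 * N - lam^2 * A * pr"
  define GB where "GB = (1 - lam) * (M + pr * D)"
  have vals: "Df x = D" "Nf x = N" "Mf x = M" "Gf x = G" "Hf x = H"
    unfolding Df_def Nf_def Mf_def Gf_def Hf_def D_def N_def M_def G_def H_def A_def B'_def by simp_all
  have B2: "0 < B'" "B' < A" using B unfolding A_def B'_def by auto
  have ci: "0 < D" "0 < M" "0 < H" "0 < G" "0 < N"
    "GA / G - lam / D - pr * lam * (1 - lam) / H < 0"
    "GB / G - (1 - lam) / D - pr * (1 - lam) / H > 0"
    using core_ineqs[OF B2 pr lam p] unfolding q_def[symmetric] N_def[symmetric] D_def[symmetric]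
      M_def[symmetric] G_def[symmetric] H_def[symmetric] GA_def[symmetric] GB_def[symmetric]
    by auto
  define dD where "dD = lam * a' + (1 - lam) * b'"
  have dDf: "(Df has_real_derivative dD) (at x)"
    unfolding Df_def dD_def by (intro DERIV_add DERIV_cmult dA dB)
  have dNf: "(Nf has_real_derivative pr * a' + 0) (at x)"
    unfolding Nf_def by (intro DERIV_add DERIV_cmult dA DERIV_const)
  have dMf: "(Mf has_real_derivative pr * dD + 0) (at x)"
    unfolding Mf_def by (intro DERIV_add DERIV_cmult dDf DERIV_const)
  have dGf: "(Gf has_real_derivative dD * Mf x + (pr * dD + 0) * Df x - (lam^2 * a' * Nf x + (pr * a' + 0) * (lam^2 * fA x))) (at x)"
    unfolding Gf_def by (intro DERIV_diff DERIV_mult DERIV_cmult dA dDf dMf dNf)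
  have dHf: "(Hf has_real_derivative (pr * dD + 0) - lam^2 * (pr * a' + 0)) (at x)"
    unfolding Hf_def by (intro DERIV_diff DERIV_cmult dMf dNf)
  have lG: "((\<lambda>y. ln (Gf y)) has_real_derivative 1 / Gf x * (dD * Mf x + (pr * dD + 0) * Df x - (lam^2 * a' * Nf x + (pr * a' + 0) * (lam^2 * fA x)))) (at x)"
    by (rule DERIV_chain2[OF DERIV_ln_divide dGf]) (use ci vals in simp)
  have lD: "((\<lambda>y. ln (Df y)) has_real_derivative 1 / Df x * dD) (at x)"
    by (rule DERIV_chain2[OF DERIV_ln_divide dDf]) (use ci vals in simp)
  have lH: "((\<lambda>y. ln (Hf y)) has_real_derivative 1 / Hf x * ((pr * dD + 0) - lam^2 * (pr * a' + 0))) (at x)"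
    by (rule DERIV_chain2[OF DERIV_ln_divide dHf]) (use ci vals in simp)
  have tot: "((\<lambda>y. ln (Gf y) - ln (Df y) - ln (Hf y)) has_real_derivative
      1 / Gf x * (dD * Mf x + (pr * dD + 0) * Df x - (lam^2 * a' * Nf x + (pr * a' + 0) * (lam^2 * fA x)))
      - 1 / Df x * dD - 1 / Hf x * ((pr * dD + 0) - lam^2 * (pr * a' + 0))) (at x)"
    by (intro DERIV_diff lG lD lH)
  have num1: "dD * M + (pr * dD + 0) * D - (lam^2 * a' * N + (pr * a' + 0) * (lam^2 * A)) = GA * a' + GB * b'"
    unfolding dD_def GA_def GB_def by (simp add: algebra_simps)
  have num2: "(pr * dD + 0) - lam^2 * (pr * a' + 0) = pr * lam * (1 - lam) * a' + pr * (1 - lam) * b'"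
    unfolding dD_def by (simp add: algebra_simps power2_eq_square)
  have eq: "1 / Gf x * (dD * Mf x + (pr * dD + 0) * Df x - (lam^2 * a' * Nf x + (pr * a' + 0) * (lam^2 * fA x)))
      - 1 / Df x * dD - 1 / Hf x * ((pr * dD + 0) - lam^2 * (pr * a' + 0))
     = a' * (GA / G - lam / D - pr * lam * (1 - lam) / H) + b' * (GB / G - (1 - lam) / D - pr * (1 - lam) / H)"
    unfolding vals A_def[symmetric] unfolding num1 num2 using ci(1-4) by (simp add: field_simps dD_def)
  have pos: "a' * (GA / G - lam / D - pr * lam * (1 - lam) / H) + b' * (GB / G - (1 - lam) / D - pr * (1 - lam) / H) > 0"
    using ci a' b' by (simp add: add_pos_pos mult_neg_neg)
  have fun_eq: "(\<lambda>y. ln (Gf y) - ln (Df y) - ln (Hf y)) = (\<lambda>y. ln ((lam * fA y + (1 - lam) * fB y) * (pr * (lam * fA y + (1 - lam) * fB y) + (1 - pr) * p)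
                         - lam^2 * fA y * (pr * fA y + (1 - pr) * p))
                - ln (lam * fA y + (1 - lam) * fB y)
                - ln ((pr * (lam * fA y + (1 - lam) * fB y) + (1 - pr) * p) - lam^2 * (pr * fA y + (1 - pr) * p)))"
    unfolding Gf_def Df_def Hf_def Mf_def Nf_def q_def by simp
  show ?thesis using tot[unfolded eq fun_eq] pos by blast
qed

lemma Jp_deriv:
  fixes fA fB :: "real \<Rightarrow> real"
  assumes dA: "(fA has_real_derivative a') (at x)" and dB: "(fB has_real_derivative b') (at x)"
    and a': "a' < 0" and b': "b' > 0"
    and B: "0 < fB x" "fB x < fA x" and lam: "0 < lam" "lam < 1"
  shows "\<exists>Dv<0. ((\<lambda>y. ln (fA y / (lam * fA y + (1 - lam) * fB y))) has_real_derivative Dv) (at x)"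
proof -
  define Df where "Df = (\<lambda>y. lam * fA y + (1 - lam) * fB y)"
  have A0: "0 < fA x" using B by simp
  have D0: "0 < Df x" unfolding Df_def using A0 B lam by (simp add: add_pos_pos)
  have dD: "(Df has_real_derivative lam * a' + (1 - lam) * b') (at x)"
    unfolding Df_def by (intro DERIV_add DERIV_cmult dA dB)
  have dq: "((\<lambda>y. fA y / Df y) has_real_derivative (a' * Df x - fA x * (lam * a' + (1 - lam) * b')) / (Df x * Df x)) (at x)"
    using DERIV_divide[OF dA dD] D0 by simp
  have qpos: "0 < fA x / Df x" using A0 D0 by simp
  have dl: "((\<lambda>y. ln (fA y / Df y)) has_real_derivative 1 / (fA x / Df x) * ((a' * Df x - fA x * (lam * a' + (1 - lam) * b')) / (Df x * Df x))) (at x)"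
    by (rule DERIV_chain2[OF DERIV_ln_divide[OF qpos] dq])
  have eq: "1 / (fA x / Df x) * ((a' * Df x - fA x * (lam * a' + (1 - lam) * b')) / (Df x * Df x))
     = a' * (1 - lam) * fB x / (fA x * Df x) - (1 - lam) * b' / Df x"
  proof -
    have num: "a' * Df x - fA x * (lam * a' + (1 - lam) * b') = a' * (1 - lam) * fB x - fA x * (1 - lam) * b'"
      unfolding Df_def by (simp add: algebra_simps)
    show ?thesis unfolding num using A0 D0 by (simp add: field_simps)
  qed
  have neg: "a' * (1 - lam) * fB x / (fA x * Df x) - (1 - lam) * b' / Df x < 0"
  proof -
    have "a' * (1 - lam) * fB x < 0" using a' lam B by (simp add: mult_neg_pos)
    then have "a' * (1 - lam) * fB x / (fA x * Df x) < 0" using A0 D0 by (simp add: divide_neg_pos)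
    moreover have "(1 - lam) * b' / Df x > 0" using lam b' D0 by simp
    ultimately show ?thesis by linarith
  qed
  show ?thesis using dl[unfolded eq] neg unfolding Df_def by blast
qed

lemma Jm_eq:
  fixes A B pr lam p :: real
  assumes B: "0 < B" "B < A" and pr: "0 < pr" "pr < 1" and lam: "0 < lam" "lam < 1" and p: "0 < p" "p < 1"
  shows "ln ((1 - (lam * (pr * A + (1 - pr) * p) / (pr * (lam * A + (1 - lam) * B) + (1 - pr) * p))
               * (lam * A / (lam * A + (1 - lam) * B)))
           / (1 - (lam * (pr * A + (1 - pr) * p) / (pr * (lam * A + (1 - lam) * B) + (1 - pr) * p)) * lam))
    = ln ((lam * A + (1 - lam) * B) * (pr * (lam * A + (1 - lam) * B) + (1 - pr) * p)
                         - lam^2 * A * (pr * A + (1 - pr) * p))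
                - ln (lam * A + (1 - lam) * B)
                - ln ((pr * (lam * A + (1 - lam) * B) + (1 - pr) * p) - lam^2 * (pr * A + (1 - pr) * p))"
proof -
  note ci = core_ineqs[OF B pr lam p]
  define D where "D = lam * A + (1 - lam) * B"
  define M where "M = pr * (lam * A + (1 - lam) * B) + (1 - pr) * p"
  define N where "N = pr * A + (1 - pr) * p"
  define G where "G = D * M - lam^2 * A * N"
  define H where "H = M - lam^2 * N"
  have pos: "0 < D" "0 < M" "0 < G" "0 < H" using ci unfolding D_def M_def G_def H_def N_def by auto
  have "(1 - (lam * N / M) * (lam * A / D)) / (1 - (lam * N / M) * lam) = G / (D * H)"
    using pos unfolding G_def H_def by (simp add: field_simps power2_eq_square)
  then have "ln ((1 - (lam * N / M) * (lam * A / D)) / (1 - (lam * N / M) * lam)) = ln G - ln D - ln H"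
    using pos by (simp add: ln_div ln_mult)
  then show ?thesis unfolding D_def M_def N_def G_def H_def by simp
qed


lemma Phi_chain [derivative_intros]:
  "(f has_real_derivative f') (at x within S) \<Longrightarrow>
   ((\<lambda>x. Phi (f x)) has_real_derivative std_normal_density (f x) * f') (at x within S)"
  by (rule DERIV_chain2[OF Phi_deriv])

lemma A_deriv:
  assumes "x > 0"
  shows "((\<lambda>y. A_fn m y s) has_real_derivative std_normal_density ((s - m) / x) * (s - m) / x^2) (at x)"
proof -
  have dg: "((\<lambda>y. (s - m) / y) has_real_derivative (0 * x - (s - m) * 1) / (x * x)) (at x)"
    using assms by (intro DERIV_divide DERIV_const DERIV_ident) auto
  have "((\<lambda>y. 1 - Phi ((s - m) / y)) has_real_derivative 0 - std_normal_density ((s - m) / x) * ((0 * x - (s - m) * 1) / (x * x))) (at x)"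
    by (intro DERIV_diff DERIV_const Phi_chain dg)
  moreover have "0 - std_normal_density ((s - m) / x) * ((0 * x - (s - m) * 1) / (x * x)) = std_normal_density ((s - m) / x) * (s - m) / x^2"
    using assms by (simp add: power2_eq_square field_simps)
  ultimately show ?thesis unfolding A_fn_def by simp
qed

lemma AB_props:
  assumes "x > 0" "mu0 < s" "s < mu1"
  shows "0 < B_fn mu0 x s" "B_fn mu0 x s < A_fn mu1 x s"
proof -
  show "0 < B_fn mu0 x s" unfolding B_fn_def using Phi_lt1 by (simp add: less_le_not_le)
  have "(s - mu1) / x < (s - mu0) / x" using assms by (simp add: divide_strict_right_mono)
  then show "B_fn mu0 x s < A_fn mu1 x s" unfolding A_fn_def B_fn_def using Phi_mono by simp
qed

theorem lemmaD6:
  fixes mu0 mu1 sH pr lam p s :: real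
  assumes "mu0 < mu1" and "sH > 0"
    and "0 < pr" "pr < 1" and "0 < lam" "lam < 1" and "0 < p" "p < 1"
    and "mu0 < s" "s < mu1"
  shows "(\<exists>D. ((\<lambda>x. J_plus mu0 mu1 x lam s) has_real_derivative D) (at sH) \<and> D < 0)
       \<and> (\<exists>D. ((\<lambda>x. J_minus mu0 mu1 x pr lam p s) has_real_derivative D) (at sH) \<and> D > 0)"
proof -
  let ?fA = "\<lambda>y. A_fn mu1 y s" and ?fB = "\<lambda>y. B_fn mu0 y s"
  have dA: "(?fA has_real_derivative std_normal_density ((s - mu1) / sH) * (s - mu1) / sH^2) (at sH)"
    using A_deriv assms by blast
  have dB: "(?fB has_real_derivative std_normal_density ((s - mu0) / sH) * (s - mu0) / sH^2) (at sH)"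
    using A_deriv[of sH mu0 s] assms unfolding A_fn_def B_fn_def by simp
  have a': "std_normal_density ((s - mu1) / sH) * (s - mu1) / sH^2 < 0"
    using assms snd_pos by (simp add: divide_neg_pos mult_pos_neg)
  have b': "std_normal_density ((s - mu0) / sH) * (s - mu0) / sH^2 > 0"
    using assms snd_pos by simp
  note ab = AB_props[OF \<open>sH > 0\<close> \<open>mu0 < s\<close> \<open>s < mu1\<close>]
  have P1: "\<exists>D. ((\<lambda>x. J_plus mu0 mu1 x lam s) has_real_derivative D) (at sH) \<and> D < 0"
    using Jp_deriv[OF dA dB a' b' ab \<open>0 < lam\<close> \<open>lam < 1\<close>]
    unfolding J_plus_def Let_def by blast
  obtain Dv where Dv: "Dv > 0" and
    dJ: "((\<lambda>y. ln ((lam * ?fA y + (1 - lam) * ?fB y) * (pr * (lam * ?fA y + (1 - lam) * ?fB y) + (1 - pr) * p)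
                         - lam^2 * ?fA y * (pr * ?fA y + (1 - pr) * p))
                - ln (lam * ?fA y + (1 - lam) * ?fB y)
                - ln ((pr * (lam * ?fA y + (1 - lam) * ?fB y) + (1 - pr) * p) - lam^2 * (pr * ?fA y + (1 - pr) * p)))
           has_real_derivative Dv) (at sH)"
    using Jm_deriv[OF dA dB a' b' ab assms(3-8)] by blast
  have "((\<lambda>x. J_minus mu0 mu1 x pr lam p s) has_real_derivative Dv) (at sH)"
  proof (rule has_field_derivative_transform_within_open[OF dJ, where S="{0<..}"])
    fix y :: real assume "y \<in> {0<..}"
    then have "y > 0" by simp
    note aby = AB_props[OF this \<open>mu0 < s\<close> \<open>s < mu1\<close>]
    show "ln ((lam * ?fA y + (1 - lam) * ?fB y) * (pr * (lam * ?fA y + (1 - lam) * ?fB y) + (1 - pr) * p)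
                         - lam^2 * ?fA y * (pr * ?fA y + (1 - pr) * p))
                - ln (lam * ?fA y + (1 - lam) * ?fB y)
                - ln ((pr * (lam * ?fA y + (1 - lam) * ?fB y) + (1 - pr) * p) - lam^2 * (pr * ?fA y + (1 - pr) * p))
          = J_minus mu0 mu1 y pr lam p s"
      unfolding J_minus_def e_star_def p_H_def p_L_def Let_def
      using Jm_eq[OF aby assms(3-8)] by simp
  qed (use assms in auto)
  with Dv P1 show ?thesis by blast
qed


end
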